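(* Let $p,q,r$ be positive integers with $\frac1p+\frac1q+\frac1r\le1$, $M=\max\{p,q,r\}$, $m>0$, and let $a$ be a real number with $a>\max\{12M,\,m^2(m+3)\}$. Let $f(x,y,z)=x^p+y^q+z^r+axyz$ and $V_a(1,t)=f^{-1}(t)\cap D^6_1$, where $D^6_1$ is the closed unit ball in $\mathbb C^3$. Then for any real $\theta$, $V_a(1,\frac1a e^{i\theta})$ is a Milnor fiber of $f$, and every point $(x,y,z)\in V_a(1,\frac1ae^{i\theta})$ satisfies $\max\{|x|,|y|,|z|\}>\frac ma$.
   Context: The Milnor radius $\varepsilon_f$ of $f$ is the supremum of $\varepsilon$ such that every sphere $S^5_\rho$ ($0<\rho\le\varepsilon$) centered at the origin is transverse to $f^{-1}(0)$. A Milnor fiber of $f$ is a set $f^{-1}(\delta e^{i\theta})\cap D^6_\varepsilon$ where $\varepsilon<\varepsilon_f$ and $\delta>0$ is such that $f^{-1}(s)$ meets $S^5_\varepsilon$ transversally for all $0\le|s|\le\delta$. *)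

theory Defs
  imports "HOL-Analysis.Analysis"
begin

text \<open>Points of C^3 are elements of complex^3 (Euclidean norm, real inner product
  of the underlying R^6).\<close>

definition fpqr :: "nat \<Rightarrow> nat \<Rightarrow> nat \<Rightarrow> real \<Rightarrow> complex^3 \<Rightarrow> complex" where
  "fpqr p q r a w = (w$1)^p + (w$2)^q + (w$3)^r + complex_of_real a * (w$1) * (w$2) * (w$3)"

text \<open>The level set of g through z meets the sphere through z (centred at 0) transversally
  at z: z is a regular point of g (the real differential is onto), and the tangent space of
  the level set (kernel of the differential) together with the tangent space of the sphere
  (vectors orthogonal to z) spans the whole real tangent space.\<close>

definition level_sphere_transversal_at :: "(complex^3 \<Rightarrow> complex) \<Rightarrow> complex^3 \<Rightarrow> bool" where
  "level_sphere_transversal_at g z \<longleftrightarrow>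
     (\<exists>g'. (g has_derivative g') (at z) \<and> range g' = UNIV \<and>
        (\<forall>w. \<exists>u v. w = u + v \<and> g' u = 0 \<and> inner v z = 0))"

definition sphere_transversal :: "(complex^3 \<Rightarrow> complex) \<Rightarrow> real \<Rightarrow> complex \<Rightarrow> bool" where
  "sphere_transversal g \<rho> s \<longleftrightarrow>
     (\<forall>z. norm z = \<rho> \<and> g z = s \<longrightarrow> level_sphere_transversal_at g z)"

definition milnor_radius :: "(complex^3 \<Rightarrow> complex) \<Rightarrow> ereal" where
  "milnor_radius g =
     (SUP \<epsilon>\<in>{\<epsilon>. \<epsilon> > 0 \<and> (\<forall>\<rho>. 0 < \<rho> \<and> \<rho> \<le> \<epsilon> \<longrightarrow> sphere_transversal g \<rho> 0)}. ereal \<epsilon>)"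

definition is_milnor_fiber :: "(complex^3 \<Rightarrow> complex) \<Rightarrow> (complex^3) set \<Rightarrow> bool" where
  "is_milnor_fiber g F \<longleftrightarrow>
     (\<exists>\<epsilon> \<delta> \<theta>. 0 < \<epsilon> \<and> ereal \<epsilon> < milnor_radius g \<and> 0 < \<delta> \<and>
        (\<forall>s. cmod s \<le> \<delta> \<longrightarrow> sphere_transversal g \<epsilon> s) \<and>
        F = {w. g w = complex_of_real \<delta> * cis \<theta>} \<inter> cball 0 \<epsilon>)"

end

theory Submission
  imports Defs
begin

lemma fpqr_deriv:
  "(fpqr p q r a has_derivative
     (\<lambda>u. (of_nat p * (z$1)^(p-1) + of_real a * z$2 * z$3) * u$1
        + (of_nat q * (z$2)^(q-1) + of_real a * z$1 * z$3) * u$2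
        + (of_nat r * (z$3)^(r-1) + of_real a * z$1 * z$2) * u$3)) (at z)"
proof -
  have d: "\<And>i. ((\<lambda>w::complex^3. w$i) has_derivative (\<lambda>u. u$i)) (at z)"
    by (rule bounded_linear_imp_has_derivative[OF bounded_linear_vec_nth])
  note d[derivative_intros]
  show ?thesis
    unfolding fpqr_def[abs_def]
    apply (rule has_derivative_eq_rhs)
     apply (intro derivative_eq_intros d)
    apply (auto simp: algebra_simps fun_eq_iff)
    done
qed

lemma lagrange3:
  fixes z g :: "complex^3"
  shows "(\<Sum>i\<in>UNIV. (cmod (z$i))\<^sup>2) * (\<Sum>i\<in>UNIV. (cmod (g$i))\<^sup>2) - (cmod (\<Sum>i\<in>UNIV. z$i * g$i))\<^sup>2
    = (cmod (z$1 * cnj (g$2) - z$2 * cnj (g$1)))\<^sup>2 + (cmod (z$1 * cnj (g$3) - z$3 * cnj (g$1)))\<^sup>2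
      + (cmod (z$2 * cnj (g$3) - z$3 * cnj (g$2)))\<^sup>2"
  unfolding sum_3 cmod_power2 by (simp add: algebra_simps power2_eq_square)

lemma transversal_from_grad:
  fixes z G :: "complex^3"
  assumes deriv: "(F has_derivative (\<lambda>u. G$1*u$1 + G$2*u$2 + G$3*u$3)) (at z)"
    and nonpar: "\<not>(\<exists>\<mu>. \<forall>i. G$i = \<mu> * cnj (z$i))"
    and z0: "z \<noteq> 0"
  shows "level_sphere_transversal_at F z"
proof -
  define D where "D = (\<lambda>u::complex^3. G$1*u$1 + G$2*u$2 + G$3*u$3)"
  have G0: "G \<noteq> 0"
  proof
    assume "G = 0" then have "\<forall>i. G$i = 0 * cnj (z$i)" by simp
    with nonpar show False by blast
  qed
  then obtain i where Gi: "G$i \<noteq> 0" by (metis vec_eq_iff zero_index)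
  have onto: "range D = UNIV"
  proof -
    { fix t :: complex
      have "D (axis i (t / G$i)) = t"
        using Gi exhaust_3[of i] by (elim disjE) (auto simp: D_def axis_def)
      then have "t \<in> range D" by (metis rangeI) }
    then show ?thesis by blast
  qed
  define N where "N = (\<Sum>j\<in>UNIV. (cmod (G$j))\<^sup>2)"
  define Z where "Z = (\<Sum>j\<in>UNIV. (cmod (z$j))\<^sup>2)"
  define S where "S = (\<Sum>j\<in>UNIV. z$j * G$j)"
  have pos: "Z * N - (cmod S)\<^sup>2 > 0"
  proof (rule ccontr)
    assume "\<not> ?thesis"
    then have "(cmod (z$1 * cnj (G$2) - z$2 * cnj (G$1)))\<^sup>2 + (cmod (z$1 * cnj (G$3) - z$3 * cnj (G$1)))\<^sup>2
      + (cmod (z$2 * cnj (G$3) - z$3 * cnj (G$2)))\<^sup>2 \<le> 0"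
      using lagrange3[of z G] unfolding Z_def N_def S_def by linarith
    then have "(cmod (z$1 * cnj (G$2) - z$2 * cnj (G$1)))\<^sup>2 = 0 \<and> (cmod (z$1 * cnj (G$3) - z$3 * cnj (G$1)))\<^sup>2 = 0
      \<and> (cmod (z$2 * cnj (G$3) - z$3 * cnj (G$2)))\<^sup>2 = 0"
      by (smt (verit) zero_le_power2)
    then have e: "z$1 * cnj (G$2) = z$2 * cnj (G$1)" "z$1 * cnj (G$3) = z$3 * cnj (G$1)"
       "z$2 * cnj (G$3) = z$3 * cnj (G$2)"
      by auto
    then have e': "cnj (z$1) * G$2 = cnj (z$2) * G$1" "cnj (z$1) * G$3 = cnj (z$3) * G$1"
       "cnj (z$2) * G$3 = cnj (z$3) * G$2"
      by (metis complex_cnj_cnj complex_cnj_mult)+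
    obtain j where zj: "z$j \<noteq> 0" using z0 by (metis vec_eq_iff zero_index)
    have "\<forall>k. G$k = (G$j / cnj (z$j)) * cnj (z$k)"
    proof
      fix k
      show "G$k = (G$j / cnj (z$j)) * cnj (z$k)"
        using zj e' exhaust_3[of j] exhaust_3[of k] by (elim disjE) (auto simp: field_simps)
    qed
    with nonpar show False by blast
  qed
  define u0 where "u0 = (\<chi> j. complex_of_real N * z$j - S * cnj (G$j))"
  have Du0: "D u0 = 0"
    unfolding D_def u0_def S_def N_def sum_3 cmod_power2
    by (simp add: algebra_simps complex_eq_iff power2_eq_square)
  have iu0: "inner u0 z = Z * N - (cmod S)\<^sup>2"
    unfolding u0_def S_def N_def Z_def sum_3 cmod_power2 inner_vec_def inner_complex_def
    by (simp add: algebra_simps power2_eq_square)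
  have span: "\<forall>w. \<exists>u v. w = u + v \<and> D u = 0 \<and> inner v z = 0"
  proof
    fix w :: "complex^3"
    define t where "t = inner w z / inner u0 z"
    have lin: "linear D" unfolding D_def by (intro linearI) (auto simp: algebra_simps)
    have "D (t *\<^sub>R u0) = 0" using Du0 linear_scale[OF lin] by simp
    moreover have "inner (w - t *\<^sub>R u0) z = 0"
      using pos iu0 by (simp add: t_def inner_diff_left)
    ultimately show "\<exists>u v. w = u + v \<and> D u = 0 \<and> inner v z = 0"
      by (intro exI[of _ "t *\<^sub>R u0"] exI[of _ "w - t *\<^sub>R u0"]) auto
  qed
  show ?thesis
    unfolding level_sphere_transversal_at_def
    using deriv onto span unfolding D_def by blast
qed

lemma power_prod_bound:
  fixes X Y Z t :: real and p q r :: nat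
  assumes "X \<ge> 0" "Y \<ge> 0" "Z \<ge> 0" "0 < t" "t \<le> 1"
    and "X^p \<ge> t" "Y^q \<ge> t" "Z^r \<ge> t"
    and "p*q + q*r + r*p \<le> p*q*r" "p > 0" "q > 0" "r > 0"
  shows "X*Y*Z \<ge> t"
proof -
  have "t^(p*q*r) \<le> t^(q*r + r*p + p*q)"
      using assms by (intro power_decreasing) (auto simp: algebra_simps)
  then have "t^(p*q*r) \<le> t^(q*r) * t^(r*p) * t^(p*q)"
    by (simp add: power_add)
  also have "\<dots> \<le> (X^p)^(q*r) * (Y^q)^(r*p) * (Z^r)^(p*q)"
  proof -
    have a: "t^(q*r) \<le> (X^p)^(q*r)" using assms by (intro power_mono) auto
    have b: "t^(r*p) \<le> (Y^q)^(r*p)" using assms by (intro power_mono) auto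
    have c: "t^(p*q) \<le> (Z^r)^(p*q)" using assms by (intro power_mono) auto
    have "t^(q*r) * t^(r*p) \<le> (X^p)^(q*r) * (Y^q)^(r*p)"
      using a b assms by (intro mult_mono) auto
    then show ?thesis using c assms by (intro mult_mono) auto
  qed
  also have "\<dots> = (X*Y*Z)^(p*q*r)"
  proof -
    have "(X^p)^(q*r) = X^(p*q*r)" by (simp add: power_mult[symmetric] mult.assoc)
    moreover have "(Y^q)^(r*p) = Y^(p*q*r)" by (simp add: power_mult[symmetric] mult.commute mult.left_commute)
    moreover have "(Z^r)^(p*q) = Z^(p*q*r)" by (simp add: power_mult[symmetric] mult.commute mult.left_commute)
    ultimately show ?thesis by (simp add: power_mult_distrib)
  qed
  finally have "t^(p*q*r) \<le> (X*Y*Z)^(p*q*r)" .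
  moreover have "p*q*r > 0" using assms by simp
  moreover obtain n where n: "p*q*r = Suc n" using calculation(2) gr0_implies_Suc by blast
  ultimately have tt: "t^(Suc n) \<le> (X*Y*Z)^(Suc n)" by simp
  have "0 \<le> X*Y*Z" using assms by simp
  with tt show ?thesis by (rule power_le_imp_le_base)
qed
lemma squeeze_zero:
  fixes X Y Z K a :: real
  assumes "X \<ge> 0" "Y \<ge> 0" "Z \<ge> 0" "K \<ge> 0" "a \<ge> 0"
    and "a*X*Z \<le> K*Y" "a*X*Y \<le> K*Z" "K^2 < a^2 * X^2"
  shows "Z = 0"
proof (rule ccontr)
  assume "Z \<noteq> 0" then have Z: "Z > 0" using assms by auto
  have "a*X*(a*X*Z) \<le> a*X*(K*Y)" using assms by (intro mult_left_mono) auto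
  also have "\<dots> = K*(a*X*Y)" by simp
  also have "\<dots> \<le> K*(K*Z)" using assms by (intro mult_left_mono) auto
  finally have "(a^2*X^2) * Z \<le> K^2 * Z" by (simp add: power2_eq_square algebra_simps)
  then have "a^2*X^2 \<le> K^2" using Z by simp
  with assms show False by simp
qed

lemma coord_bound:
  fixes x A \<mu> s :: complex and p :: nat and Sr k :: real
  assumes h: "of_nat p * x^p + A = \<mu> * of_real ((cmod x)^2)"
    and hs: "\<mu> * of_real Sr = s - of_real k * A" and k: "k \<ge> 0"
    and "(cmod x)^2 \<le> p * Sr" and Sr: "Sr > 0"
  shows "cmod A \<le> cmod s * p + p * cmod x ^ p"
proof -
  define X2 where "X2 = (cmod x)^2"
  have X2: "X2 \<ge> 0" by (simp add: X2_def)
  have h2: "of_nat p * x^p = \<mu> * of_real X2 - A" using h unfolding X2_def by (simp add: eq_diff_eq)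
  have "of_nat p * x^p * of_real Sr = (s - of_real k * A) * of_real X2 - A * of_real Sr"
    unfolding h2 hs[symmetric] by (simp add: algebra_simps)
  then have eq: "A * of_real (Sr + k * X2) = s * of_real X2 - of_nat p * x^p * of_real Sr"
    by (simp add: algebra_simps)
  have R: "Sr + k * X2 \<ge> 0" using k X2 Sr by simp
  have "cmod A * (Sr + k * X2) = cmod (A * of_real (Sr + k * X2))"
    by (simp only: norm_mult norm_of_real abs_of_nonneg[OF R])
  also have "\<dots> = cmod (s * of_real X2 - of_nat p * x^p * of_real Sr)" by (simp only: eq)
  also have "\<dots> \<le> cmod (s * of_real X2) + cmod (of_nat p * x^p * of_real Sr)"
    by (rule norm_triangle_ineq4)
  also have "\<dots> = cmod s * X2 + p * cmod x ^ p * Sr"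
    using X2 Sr by (simp add: norm_mult norm_power)
  finally have 1: "cmod A * (Sr + k * X2) \<le> cmod s * X2 + p * cmod x ^ p * Sr" .
  have 2: "cmod A * Sr \<le> cmod A * (Sr + k * X2)"
    using k X2 by (intro mult_left_mono) auto
  have 3: "cmod s * X2 \<le> cmod s * (p * Sr)"
    using assms unfolding X2_def by (intro mult_left_mono) auto
  from 1 2 3 have "cmod A * Sr \<le> (cmod s * p + p * cmod x ^ p) * Sr"
    by (simp add: algebra_simps)
  then show ?thesis using Sr by simp
qed

lemma two_zero:
  fixes w s :: complex and a :: real and n :: nat
  assumes "w^n = s" "n \<ge> 1" "w \<noteq> 0" "s = 0 \<or> ((cmod w)^2 = 1 \<and> cmod s \<le> 1/a)" "a > 1"
  shows False
proof (cases "s = 0")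
  case True then show False using assms by simp
next
  case False
  then have "(cmod w)^2 = 1" "cmod s \<le> 1/a" using assms by auto
  then have "cmod w = 1" by (smt (verit) norm_ge_zero power2_eq_1_iff)
  then have "cmod s = 1" using assms(1) by (metis norm_power power_one)
  moreover have "1/a < 1" using assms by simp
  ultimately show False using \<open>cmod s \<le> 1/a\<close> by simp
qed

lemma coord_ineq:
  fixes x w \<mu> :: complex and p M :: nat
  assumes "of_nat p * x^(p-1) + w = \<mu> * cnj x" "cmod x \<le> 1" "p \<ge> 2" "p \<le> M"
  shows "cmod w \<le> (cmod \<mu> + M) * cmod x"
proof -
  have "w = \<mu> * cnj x - of_nat p * x^(p-1)" using assms(1) by (metis add_diff_cancel_left')
  then have "cmod w \<le> cmod (\<mu> * cnj x) + cmod (of_nat p * x^(p-1))"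
    by (simp add: norm_triangle_ineq4)
  also have "\<dots> = cmod \<mu> * cmod x + p * cmod x ^(p-1)" by (simp add: norm_mult norm_power)
  also have "\<dots> \<le> cmod \<mu> * cmod x + M * cmod x"
  proof -
    have "cmod x ^(p-1) \<le> cmod x ^ 1" using assms by (intro power_decreasing) auto
    then have "p * cmod x ^(p-1) \<le> M * cmod x"
      using assms by (intro mult_mono) auto
    then show ?thesis by simp
  qed
  finally show ?thesis by (simp add: algebra_simps)
qed

lemma mult_pow_eq:
  fixes x w \<mu> :: complex and p :: nat
  assumes "of_nat p * x^(p-1) + w = \<mu> * cnj x" "p \<ge> 1"
  shows "of_nat p * x^p + w * x = \<mu> * of_real ((cmod x)^2)"
proof -
  have 1: "x^(p-1)*x = x^p" using assms(2) by (intro power_minus_mult) simp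
  have 2: "cnj x * x = of_real ((cmod x)^2)" by (metis complex_norm_square mult.commute)
  have "of_nat p * x^p + w * x = (of_nat p * x^(p-1) + w) * x"
    by (simp only: distrib_right mult.assoc 1)
  also have "\<dots> = \<mu> * (cnj x * x)" by (simp only: assms(1) mult.assoc)
  finally show ?thesis by (simp only: 2)
qed

lemma tbound:
  fixes al c W P M :: real
  assumes "al \<le> c*P + P*W" "2*M*c \<le> al" "0 \<le> c" "0 < P" "P \<le> M" "0 \<le> al"
  shows "al/(2*M) \<le> W"
proof -
  have "c*P \<le> c*M" using assms by (intro mult_left_mono) auto
  moreover have "2*(c*M) \<le> al" using assms by (simp add: mult.commute mult.left_commute)
  ultimately have "al/2 \<le> P*W" using assms by linarith
  then have "al/(2*P) \<le> W" using assms by (simp add: field_simps)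
  moreover have "al/(2*M) \<le> al/(2*P)" using assms by (intro divide_left_mono) auto
  ultimately show ?thesis by linarith
qed

lemma gt1_pow:
  fixes X :: real
  assumes "X^p > 1" "X \<ge> 0"
  shows "X^2 > 1"
proof -
  have "X > 1"
  proof (rule ccontr)
    assume "\<not> X > 1" then have "X^p \<le> 1" using assms by (intro power_le_one) auto
    with assms show False by simp
  qed
  then show ?thesis by (simp add: one_less_power)
qed

lemma core:
  fixes x y z \<mu> s :: complex and a :: real and p q r M :: nat
  assumes p2: "p \<ge> 2" and q2: "q \<ge> 2" and r2: "r \<ge> 2"
    and pM: "p \<le> M" and qM: "q \<le> M" and rM: "r \<le> M"
    and pqr: "1/real p + 1/real q + 1/real r \<le> 1"
    and a: "a > 12 * real M"
    and E1: "of_nat p * x^(p-1) + of_real a * y * z = \<mu> * cnj x"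
    and E2: "of_nat q * y^(q-1) + of_real a * x * z = \<mu> * cnj y"
    and E3: "of_nat r * z^(r-1) + of_real a * x * y = \<mu> * cnj z"
    and F: "x^p + y^q + z^r + of_real a * x * y * z = s"
    and nz: "\<not>(x = 0 \<and> y = 0 \<and> z = 0)"
    and rho: "(cmod x)^2 + (cmod y)^2 + (cmod z)^2 < 3"
    and sc: "s = 0 \<or> ((cmod x)^2 + (cmod y)^2 + (cmod z)^2 = 1 \<and> cmod s \<le> 1/a)"
  shows False
proof -
  have M2: "real M \<ge> 2" using pM p2 by linarith
  have a1: "a > 1" using a M2 by linarith
  have a0: "a \<noteq> 0" using a1 by simp
  have x0: "x \<noteq> 0"
  proof
    assume x: "x = 0"
    then have "of_real a * y * z = 0" using E1 p2 by (simp add: power_0_left)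
    then have "y = 0 \<or> z = 0" using a0 by simp
    then show False
    proof
      assume y: "y = 0"
      show False by (rule two_zero[of z r s a]) (use F x y r2 p2 q2 r2 nz sc a1 in \<open>auto simp: power_0_left\<close>)
    next
      assume z: "z = 0"
      show False by (rule two_zero[of y q s a]) (use F x z q2 p2 q2 r2 nz sc a1 in \<open>auto simp: power_0_left\<close>)
    qed
  qed
  have y0: "y \<noteq> 0"
  proof
    assume y: "y = 0"
    then have "of_real a * x * z = 0" using E2 q2 by (simp add: power_0_left)
    then have "x = 0 \<or> z = 0" using a0 by simp
    then show False
    proof
      assume x: "x = 0"
      show False by (rule two_zero[of z r s a]) (use F x y r2 p2 q2 r2 nz sc a1 in \<open>auto simp: power_0_left\<close>)
    next
      assume z: "z = 0"
      show False by (rule two_zero[of x p s a]) (use F y z p2 p2 q2 r2 nz sc a1 in \<open>auto simp: power_0_left\<close>)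
    qed
  qed
  have z0: "z \<noteq> 0"
  proof
    assume z: "z = 0"
    then have "of_real a * x * y = 0" using E3 r2 by (simp add: power_0_left)
    then have "x = 0 \<or> y = 0" using a0 by simp
    then show False
    proof
      assume x: "x = 0"
      show False by (rule two_zero[of y q s a]) (use F x z q2 p2 q2 r2 nz sc a1 in \<open>auto simp: power_0_left\<close>)
    next
      assume y: "y = 0"
      show False by (rule two_zero[of x p s a]) (use F y z p2 p2 q2 r2 nz sc a1 in \<open>auto simp: power_0_left\<close>)
    qed
  qed
  define X where "X = cmod x"
  define Y where "Y = cmod y"
  define Z where "Z = cmod z"
  define A where "A = of_real a * x * y * z"
  define c where "c = cmod s"
  define k where "k = 1 - 1/real p - 1/real q - 1/real r"
  define Sr where "Sr = X^2/real p + Y^2/real q + Z^2/real r"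
  have X: "X > 0" "Y > 0" "Z > 0" using x0 y0 z0 by (auto simp: X_def Y_def Z_def)
  have k0: "k \<ge> 0" "k \<le> 1"
  proof -
    have "1/real p \<ge> 0" "1/real q \<ge> 0" "1/real r \<ge> 0" by auto
    then show "k \<ge> 0" "k \<le> 1" using pqr unfolding k_def by linarith+
  qed
  have pr: "real p > 0" "real q > 0" "real r > 0" using p2 q2 r2 by auto
  have Sr0: "Sr > 0" using X pr unfolding Sr_def by (intro add_pos_pos divide_pos_pos) auto
  have alpha: "cmod A = a * X * Y * Z" using a1 by (simp add: A_def X_def Y_def Z_def norm_mult)
  have hx: "of_nat p * x^p + A = \<mu> * of_real (X^2)"
    using mult_pow_eq[OF E1] p2 unfolding A_def X_def by (simp add: algebra_simps)
  have hy: "of_nat q * y^q + A = \<mu> * of_real (Y^2)"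
    using mult_pow_eq[OF E2] q2 unfolding A_def Y_def by (simp add: algebra_simps)
  have hz: "of_nat r * z^r + A = \<mu> * of_real (Z^2)"
    using mult_pow_eq[OF E3] r2 unfolding A_def Z_def by (simp add: algebra_simps)
  have hs: "\<mu> * of_real Sr = s - of_real k * A"
  proof -
    have "\<mu> * of_real Sr = (\<mu> * of_real (X^2))/of_nat p + (\<mu> * of_real (Y^2))/of_nat q + (\<mu> * of_real (Z^2))/of_nat r"
      unfolding Sr_def by (simp add: distrib_left)
    also have "\<dots> = (of_nat p * x^p + A)/of_nat p + (of_nat q * y^q + A)/of_nat q + (of_nat r * z^r + A)/of_nat r"
      by (simp only: hx hy hz)
    also have "\<dots> = x^p + y^q + z^r + A * (1/of_nat p + 1/of_nat q + 1/of_nat r)"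
      using pr by (simp add: field_simps)
    also have "\<dots> = s - of_real k * A"
      unfolding F[symmetric] A_def k_def by (simp add: algebra_simps)
    finally show ?thesis .
  qed
  have sx: "X^2 \<le> p*Sr" "Y^2 \<le> q*Sr" "Z^2 \<le> r*Sr"
  proof -
    have t: "0 \<le> X^2/real p" "0 \<le> Y^2/real q" "0 \<le> Z^2/real r" by auto
    have "real p * (X^2/real p) = X^2" "real q * (Y^2/real q) = Y^2" "real r * (Z^2/real r) = Z^2"
      using pr by auto
    moreover have "0 \<le> real p * (Y^2/real q)" "0 \<le> real p * (Z^2/real r)"
      "0 \<le> real q * (X^2/real p)" "0 \<le> real q * (Z^2/real r)"
      "0 \<le> real r * (X^2/real p)" "0 \<le> real r * (Y^2/real q)" by auto
    ultimately show "X^2 \<le> p*Sr" "Y^2 \<le> q*Sr" "Z^2 \<le> r*Sr"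
      unfolding Sr_def distrib_left by linarith+
  qed
  have bx: "cmod A \<le> c * p + p * X ^ p"
    unfolding c_def X_def
    by (rule coord_bound[OF hx[unfolded X_def] hs k0(1)]) (use sx Sr0 in \<open>auto simp: X_def\<close>)
  have by': "cmod A \<le> c * q + q * Y ^ q"
    unfolding c_def Y_def
    by (rule coord_bound[OF hy[unfolded Y_def] hs k0(1)]) (use sx Sr0 in \<open>auto simp: Y_def\<close>)
  have bz: "cmod A \<le> c * r + r * Z ^ r"
    unfolding c_def Z_def
    by (rule coord_bound[OF hz[unfolded Z_def] hs k0(1)]) (use sx Sr0 in \<open>auto simp: Z_def\<close>)
  have al: "cmod A > 0" using alpha X a1 by simp
  have c0: "c \<ge> 0" by (simp add: c_def)
  have Mr: "real p \<le> M" "real q \<le> M" "real r \<le> M" using pM qM rM by auto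
  show False
  proof (cases "cmod A \<ge> 2 * real M * c")
    case True
    define t where "t = cmod A / (2*real M)"
    have t0: "t > 0" using al M2 by (simp add: t_def)
    have tx: "t \<le> X^p" unfolding t_def by (rule tbound[OF bx True c0 pr(1) Mr(1)]) (use al in auto)
    have ty: "t \<le> Y^q" unfolding t_def by (rule tbound[OF by' True c0 pr(2) Mr(2)]) (use al in auto)
    have tz: "t \<le> Z^r" unfolding t_def by (rule tbound[OF bz True c0 pr(3) Mr(3)]) (use al in auto)
    show False
    proof (cases "t \<le> 1")
      case True
      have nat: "p*q + q*r + r*p \<le> p*q*r"
      proof -
        have "(1/real p + 1/real q + 1/real r) * (real p * real q * real r) \<le> 1 * (real p * real q * real r)"
          using pqr pr by (intro mult_right_mono) auto
        moreover have "(1/real p + 1/real q + 1/real r) * (real p * real q * real r) = real (p*q + q*r + r*p)"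
          using pr by (simp add: field_simps)
        ultimately have "real (p*q + q*r + r*p) \<le> real (p*q*r)" by simp
        then show ?thesis by linarith
      qed
      have "X*Y*Z \<ge> t"
        by (rule power_prod_bound[OF _ _ _ t0 True tx ty tz nat]) (use X p2 q2 r2 in auto)
      then have "X*Y*Z \<ge> a*X*Y*Z/(2*M)" using alpha by (simp add: t_def)
      then have "(X*Y*Z) * (2*M) \<ge> (X*Y*Z) * a" using M2 by (simp add: field_simps)
      then have "2*M \<ge> a" using X by (simp add: mult_le_cancel_left_pos)
      then show False using a M2 by linarith
    next
      case False
      have "X^2 > 1" using gt1_pow[of X p] False tx X by auto
      moreover have "Y^2 > 1" using gt1_pow[of Y q] False ty X by auto
      moreover have "Z^2 > 1" using gt1_pow[of Z r] False tz X by auto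
      ultimately show False using rho unfolding X_def Y_def Z_def by linarith
    qed
  next
    case False
    then have "2*real M*c > 0" using al by linarith
    then have cpos: "c > 0" using M2 by (simp add: zero_less_mult_iff)
    then have "s \<noteq> 0" by (auto simp: c_def)
    then have "(cmod x)^2 + (cmod y)^2 + (cmod z)^2 = 1 \<and> cmod s \<le> 1/a" using sc by blast
    then have sph: "X^2 + Y^2 + Z^2 = 1" and ca: "c \<le> 1/a" unfolding X_def Y_def Z_def c_def by auto
    have X1: "X \<le> 1" "Y \<le> 1" "Z \<le> 1"
    proof -
      have nn: "0 \<le> X^2" "0 \<le> Y^2" "0 \<le> Z^2" by simp_all
      have "X^2 \<le> 1" "Y^2 \<le> 1" "Z^2 \<le> 1" using sph nn by linarith+
      then show "X \<le> 1" "Y \<le> 1" "Z \<le> 1" using X by (simp_all add: abs_square_le_1)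
    qed
    have "cmod \<mu> * Sr \<le> c + cmod A"
    proof -
      have "cmod \<mu> * Sr = cmod (s - of_real k * A)" using hs[symmetric] Sr0
        by (simp add: norm_mult)
      also have "\<dots> \<le> c + k * cmod A" using k0 by (simp add: c_def norm_triangle_ineq4[THEN order_trans] norm_mult)
      also have "\<dots> \<le> c + cmod A" using k0 al by (simp add: mult_left_le_one_le)
      finally show ?thesis .
    qed
    moreover have "Sr \<ge> 1/M"
    proof -
      have "X^2/M \<le> X^2/real p" "Y^2/M \<le> Y^2/real q" "Z^2/M \<le> Z^2/real r"
        using Mr pr by (auto intro!: divide_left_mono)
      moreover have "X^2/M + Y^2/M + Z^2/M = 1/M" using sph by (simp add: add_divide_distrib[symmetric])
      ultimately show ?thesis unfolding Sr_def by linarith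
    qed
    ultimately have "cmod \<mu> * (1/M) \<le> c + cmod A"
      by (smt (verit) mult_left_mono norm_ge_zero)
    then have mu1: "cmod \<mu> \<le> M * (c + cmod A)" using M2 by (simp add: field_simps)
    have "c + cmod A \<le> c * (1 + 2*M)" using False by (simp add: algebra_simps)
    also have "\<dots> \<le> (1/a) * (1 + 2*M)" using ca M2 by (intro mult_right_mono) auto
    also have "\<dots> = (1 + 2*M) / a" by simp
    finally have "M * (c + cmod A) \<le> M * ((1 + 2*M)/a)" by (intro mult_left_mono) auto
    then have "cmod \<mu> \<le> M * ((1 + 2*M)/a)" using mu1 by linarith
    also have "\<dots> \<le> M/4"
    proof -
      have "(1 + 2*M)/a \<le> (a/4)/a" using a M2 a1 by (intro divide_right_mono) auto
      also have "(a/4)/a = 1/4" using a1 by simp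
      finally have "(1 + 2*M)/a \<le> 1/4" .
      then have "M * ((1 + 2*M)/a) \<le> M * (1/4)" by (intro mult_left_mono) auto
      then show ?thesis by simp
    qed
    finally have mu: "cmod \<mu> \<le> M/4" .
    define K where "K = cmod \<mu> + M"
    have K0: "K \<ge> 0" by (simp add: K_def)
    have KK: "K^2 < a^2 / 3"
    proof -
      have "K \<le> 5*M/4" using mu unfolding K_def by linarith
      then have "K^2 \<le> (5*M/4)^2" using K0 by (intro power_mono) auto
      also have "\<dots> = (25/16) * (real M * real M)" by (simp add: power2_eq_square)
      also have "\<dots> < 48 * (real M * real M)" using M2 by simp
      also have "\<dots> = (12*M)^2/3" by (simp add: power2_eq_square)
      also have "\<dots> < a^2/3"
      proof -
        have "(12*real M)^2 < a^2" using a M2 by (intro power_strict_mono) auto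
        then show ?thesis by simp
      qed
      finally show ?thesis .
    qed
    have c1: "a*Y*Z \<le> K*X"
      using coord_ineq[OF E1 _ p2 pM] X1 a1 unfolding K_def X_def Y_def Z_def by (simp add: norm_mult)
    have c2: "a*X*Z \<le> K*Y"
      using coord_ineq[OF E2 _ q2 qM] X1 a1 unfolding K_def X_def Y_def Z_def by (simp add: norm_mult)
    have c3: "a*X*Y \<le> K*Z"
      using coord_ineq[OF E3 _ r2 rM] X1 a1 unfolding K_def X_def Y_def Z_def by (simp add: norm_mult)
    have "X^2 \<ge> 1/3 \<or> Y^2 \<ge> 1/3 \<or> Z^2 \<ge> 1/3" using sph by linarith
    moreover have "K^2 < a^2 * W^2" if "W^2 \<ge> 1/3" for W
    proof -
      have "a^2 * (1/3) \<le> a^2 * W^2" using that by (intro mult_left_mono) auto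
      then have "a^2/3 \<le> a^2 * W^2" by simp
      then show ?thesis using KK by linarith
    qed
    ultimately show False
    proof (elim disjE)
      assume "X^2 \<ge> 1/3"
      then have "Z = 0" using c2 c3 X K0 a1 \<open>1/3 \<le> X^2 \<Longrightarrow> K^2 < a^2 * X^2\<close>
        by (intro squeeze_zero[of X Y Z K a]) auto
      then show False using X by simp
    next
      assume "Y^2 \<ge> 1/3"
      then have "Z = 0" using c1 c3 X K0 a1 \<open>1/3 \<le> Y^2 \<Longrightarrow> K^2 < a^2 * Y^2\<close>
        by (intro squeeze_zero[of Y X Z K a]) (auto simp: mult.commute mult.left_commute)
      then show False using X by simp
    next
      assume "Z^2 \<ge> 1/3"
      then have "Y = 0" using c1 c2 X K0 a1 \<open>1/3 \<le> Z^2 \<Longrightarrow> K^2 < a^2 * Z^2\<close>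
        by (intro squeeze_zero[of Z X Y K a]) (auto simp: mult.commute mult.left_commute)
      then show False using X by simp
    qed
  qed
qed

lemma normsq3: "(norm (z::complex^3))^2 = (cmod (z$1))^2 + (cmod (z$2))^2 + (cmod (z$3))^2"
  by (simp add: norm_vec_def L2_set_def sum_3)

lemma trans_at:
  fixes p q r M :: nat and a :: real and z :: "complex^3" and s :: complex
  assumes p2: "p \<ge> 2" and q2: "q \<ge> 2" and r2: "r \<ge> 2"
    and pM: "p \<le> M" and qM: "q \<le> M" and rM: "r \<le> M"
    and pqr: "1/real p + 1/real q + 1/real r \<le> 1"
    and a: "a > 12 * real M"
    and fz: "fpqr p q r a z = s" and z0: "z \<noteq> 0"
    and cond: "(s = 0 \<and> norm z \<le> 3/2) \<or> (norm z = 1 \<and> cmod s \<le> 1/a)"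
  shows "level_sphere_transversal_at (fpqr p q r a) z"
proof -
  define G :: "complex^3" where "G = vector [of_nat p * (z$1)^(p-1) + of_real a * z$2 * z$3,
      of_nat q * (z$2)^(q-1) + of_real a * z$1 * z$3, of_nat r * (z$3)^(r-1) + of_real a * z$1 * z$2]"
  have d: "(fpqr p q r a has_derivative (\<lambda>u. G$1*u$1 + G$2*u$2 + G$3*u$3)) (at z)"
    unfolding G_def vector_3 by (rule fpqr_deriv)
  show ?thesis
  proof (rule transversal_from_grad[OF d _ z0])
    show "\<not> (\<exists>\<mu>. \<forall>i. G $ i = \<mu> * cnj (z $ i))"
    proof
      assume "\<exists>\<mu>. \<forall>i. G $ i = \<mu> * cnj (z $ i)"
      then obtain \<mu> where h: "\<forall>i. G $ i = \<mu> * cnj (z $ i)" by blast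
      have E: "of_nat p * (z$1)^(p-1) + of_real a * z$2 * z$3 = \<mu> * cnj (z$1)"
        "of_nat q * (z$2)^(q-1) + of_real a * z$1 * z$3 = \<mu> * cnj (z$2)"
        "of_nat r * (z$3)^(r-1) + of_real a * z$1 * z$2 = \<mu> * cnj (z$3)"
        using h[rule_format, of 1] h[rule_format, of 2] h[rule_format, of 3] unfolding G_def by simp_all
      have nz: "\<not> (z$1 = 0 \<and> z$2 = 0 \<and> z$3 = 0)"
        using z0 by (auto simp: vec_eq_iff forall_3)
      have n2: "(norm z)^2 = (cmod (z$1))^2 + (cmod (z$2))^2 + (cmod (z$3))^2" by (rule normsq3)
      have rho: "(cmod (z$1))^2 + (cmod (z$2))^2 + (cmod (z$3))^2 < 3"
      proof -
        have "norm z \<le> 3/2" using cond by auto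
        then have "(norm z)^2 \<le> (3/2)^2" by (intro power_mono) auto
        then show ?thesis using n2 by (simp add: power2_eq_square)
      qed
      have sc: "s = 0 \<or> ((cmod (z$1))^2 + (cmod (z$2))^2 + (cmod (z$3))^2 = 1 \<and> cmod s \<le> 1/a)"
        using cond n2 by auto
      show False
        by (rule core[OF p2 q2 r2 pM qM rM pqr a E(1) E(2) E(3) _ nz rho sc])
          (use fz in \<open>simp add: fpqr_def\<close>)
    qed
  qed
qed

lemma small_bound:
  fixes X Y Z a m :: real and p q r :: nat
  assumes "0 \<le> X" "0 \<le> Y" "0 \<le> Z" "X \<le> 1" "Y \<le> 1" "Z \<le> 1"
    "X \<le> m/a" "Y \<le> m/a" "Z \<le> m/a" "p \<ge> 2" "q \<ge> 2" "r \<ge> 2" "a > 0" "m > 0"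
    "a > m^2 * (m + 3)"
  shows "X^p + Y^q + Z^r + a*X*Y*Z < 1/a"
proof -
  have "X^p \<le> X^2" "Y^q \<le> Y^2" "Z^r \<le> Z^2" using assms by (auto intro!: power_decreasing)
  moreover have "X^2 \<le> (m/a)^2" "Y^2 \<le> (m/a)^2" "Z^2 \<le> (m/a)^2" using assms by (auto intro!: power_mono)
  moreover have "X*Y*Z \<le> (m/a)*(m/a)*(m/a)" using assms by (intro mult_mono) auto
  moreover have "a*(X*Y*Z) \<le> a*((m/a)*(m/a)*(m/a))"
    using calculation(7) assms by (intro mult_left_mono) auto
  ultimately have "X^p + Y^q + Z^r + a*X*Y*Z \<le> 3*(m/a)^2 + a*((m/a)*(m/a)*(m/a))"
    by (simp add: mult.assoc)
  also have "\<dots> = (m^2*(m+3))/a * (1/a)" using assms by (simp add: field_simps power2_eq_square power3_eq_cube)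
  also have "\<dots> < 1 * (1/a)" using assms by (intro mult_strict_right_mono) (auto simp: field_simps)
  finally show ?thesis by simp
qed

theorem lemma1p9:
  fixes p q r :: nat and a m \<theta> :: real
  assumes "p > 0" "q > 0" "r > 0"
    and "1 / real p + 1 / real q + 1 / real r \<le> 1"
    and "m > 0"
    and "a > max (12 * real (max p (max q r))) (m\<^sup>2 * (m + 3))"
  shows "is_milnor_fiber (fpqr p q r a)
           ({w. fpqr p q r a w = complex_of_real (1 / a) * cis \<theta>} \<inter> cball 0 1)
       \<and> (\<forall>w \<in> {w. fpqr p q r a w = complex_of_real (1 / a) * cis \<theta>} \<inter> cball 0 1.
             max (cmod (w$1)) (max (cmod (w$2)) (cmod (w$3))) > m / a)"
proof -
  have inv: "1/real p > 0" "1/real q > 0" "1/real r > 0" using assms by auto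
  have p2: "p \<ge> 2"
  proof (rule ccontr)
    assume "\<not> p \<ge> 2" then have "p = 1" using assms by simp
    then show False using assms(4) inv by simp
  qed
  have q2: "q \<ge> 2"
  proof (rule ccontr)
    assume "\<not> q \<ge> 2" then have "q = 1" using assms by simp
    then show False using assms(4) inv by simp
  qed
  have r2: "r \<ge> 2"
  proof (rule ccontr)
    assume "\<not> r \<ge> 2" then have "r = 1" using assms by simp
    then show False using assms(4) inv by simp
  qed
  define M where "M = max p (max q r)"
  have pM: "p \<le> M" and qM: "q \<le> M" and rM: "r \<le> M" by (auto simp: M_def)
  have a: "a > 12 * real M" using assms(6) unfolding M_def by linarith
  have am: "a > m^2 * (m + 3)" using assms(6) by linarith
  have a0: "a > 0" using a by simp
  let ?f = "fpqr p q r a"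
  have "3/2 \<in> {\<epsilon>. \<epsilon> > 0 \<and> (\<forall>\<rho>. 0 < \<rho> \<and> \<rho> \<le> \<epsilon> \<longrightarrow> sphere_transversal ?f \<rho> 0)}"
  proof -
    have "sphere_transversal ?f \<rho> 0" if "0 < \<rho>" "\<rho> \<le> 3/2" for \<rho>
      unfolding sphere_transversal_def
    proof (intro allI impI)
      fix z :: "complex^3" assume "norm z = \<rho> \<and> ?f z = 0"
      then show "level_sphere_transversal_at ?f z"
        using that by (intro trans_at[OF p2 q2 r2 pM qM rM assms(4) a, of z 0]) auto
    qed
    then show ?thesis by auto
  qed
  then have "ereal (3/2) \<le> milnor_radius ?f"
    unfolding milnor_radius_def by (rule SUP_upper)
  then have mr: "ereal 1 < milnor_radius ?f"
    by (rule order_less_le_trans[rotated]) simp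
  have st: "\<forall>s. cmod s \<le> 1/a \<longrightarrow> sphere_transversal ?f 1 s"
    unfolding sphere_transversal_def
  proof (intro allI impI)
    fix s and z :: "complex^3" assume "cmod s \<le> 1/a" "norm z = 1 \<and> ?f z = s"
    then show "level_sphere_transversal_at ?f z"
      by (intro trans_at[OF p2 q2 r2 pM qM rM assms(4) a, of z s]) auto
  qed
  have part1: "is_milnor_fiber ?f ({w. ?f w = complex_of_real (1 / a) * cis \<theta>} \<inter> cball 0 1)"
    unfolding is_milnor_fiber_def
    by (intro exI[of _ 1] exI[of _ "1/a"] exI[of _ \<theta>]) (use mr st a0 in auto)
  have part2: "max (cmod (w$1)) (max (cmod (w$2)) (cmod (w$3))) > m / a"
    if w: "w \<in> {w. ?f w = complex_of_real (1 / a) * cis \<theta>} \<inter> cball 0 1" for w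
  proof (rule ccontr)
    assume "\<not> ?thesis"
    then have le: "cmod (w$1) \<le> m/a" "cmod (w$2) \<le> m/a" "cmod (w$3) \<le> m/a" by auto
    have n1: "norm w \<le> 1" using w by auto
    have c1: "cmod (w$1) \<le> 1" "cmod (w$2) \<le> 1" "cmod (w$3) \<le> 1"
      using n1 Finite_Cartesian_Product.norm_nth_le[of w] by (meson order_trans)+
    have "cmod (?f w) \<le> cmod (w$1)^p + cmod (w$2)^q + cmod (w$3)^r + a * cmod (w$1) * cmod (w$2) * cmod (w$3)"
      unfolding fpqr_def using a0
      by (smt (verit) norm_mult norm_of_real norm_power norm_triangle_ineq abs_of_pos)
    also have "\<dots> < 1/a"
      by (rule small_bound) (use le c1 p2 q2 r2 a0 assms(5) am in auto)
    finally have "cmod (?f w) < 1/a" .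
    moreover have "cmod (?f w) = 1/a" using w a0 by (simp add: norm_divide)
    ultimately show False by simp
  qed
  show ?thesis using part1 part2 by blast
qed

end
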